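(* Assume the pairs $(Y_i(0),Y_i(1))$, $i\in[N]$, are independent and identically distributed, with $Y_i(a)\sim F_a$ for $a\in\{0,1\}$, where $F_a$ is supported on a finite set $\mathcal{Y}=\{y_1,\dots,y_K\}$, and assume the assignment vector $Z=(Z_1,\dots,Z_N)\in\{0,1\}^N$ is independent of the potential outcomes. Let $P_i=\mathbb{P}(Z_i=1)$, $P=\frac1N\sum_i P_i$, $\tilde P=\min(P,1-P)>0$, and $\epsilon>0$. Let $X^{true}$ be the indicator vector $X^{true,(a)}_{ik}=\mathbb{I}(Y_i(a)=y_k)$ of the true potential outcomes, let $Q$ be a symmetric matrix with $\mathbf{Var}_Z[\hat\tau]=(X^{true})^TQX^{true}$, and let $V^*$ be the maximum of $X^TQX$ over all binary $X=(X^{(a)}_{ik})$ satisfying constraints (a)--(d) in the context. Then $$\mathbb{P}\big(V^*\ge \mathbf{Var}_Z[\hat\tau]\big)\ \ge\ 1-\beta,\qquad \beta:=8\exp\Big(-\frac{\epsilon^2}{4}N\tilde P\Big)+\frac{32}{N^2\tilde P^2}\sum_{i,j\in[N]}\mathbf{Cov}(Z_i,Z_j).$$ More precisely, with probability at least $1-\beta$ the true indicator vector $X^{true}$ satisfies constraint (d), hence is feasible.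
   Context: Finite population of $N$ units with treatment indicators $Z_i\in\{0,1\}$, potential outcomes $Y_i(0),Y_i(1)$, observed outcomes $Y_i^{obs}=Y_i(Z_i)$, $N_1=\sum_i Z_i$, $N_0=N-N_1$. $\hat\tau$ is an estimator of the average treatment effect whose variance over the randomness of $Z$ (potential outcomes held fixed) is denoted $\mathbf{Var}_Z[\hat\tau]$. The constraints on binary variables $X^{(a)}_{ik}\in\{0,1\}$ ($a\in\{0,1\}$, $i\in[N]$, $k\in[K]$) are: (a) for all $i,k$: $X^{(Z_i)}_{ik}=1$ iff $Y_i^{obs}=y_k$; (b) for all $a,i,k$: $X^{(a)}_{ik}=0$ whenever $y_k\notin \mathrm{supp}(F_a)$; (c) for all $a,i$: $\sum_{k=1}^K X^{(a)}_{ik}=1$; (d) for all $a,k$: $\left|\sum_{i=1}^N X^{(a)}_{ik}\left(\frac{Z_i}{N_1}-\frac{1-Z_i}{N_0}\right)\right|\le \epsilon$. *)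

theory Defs
  imports "HOL-Probability.Probability"
begin

text \<open>Units are indexed by i < N, outcome values by k < K (0-based).
  Treatment arm a :: bool, True = treatment (1), False = control (0).\<close>

definition po :: "real \<times> real \<Rightarrow> bool \<Rightarrow> real" where
  "po p a = (if a then snd p else fst p)"

definition Yobs :: "(nat \<Rightarrow> bool) \<Rightarrow> (nat \<Rightarrow> real \<times> real) \<Rightarrow> nat \<Rightarrow> real" where
  "Yobs z ys i = po (ys i) (z i)"

definition covariance :: "'a pmf \<Rightarrow> ('a \<Rightarrow> real) \<Rightarrow> ('a \<Rightarrow> real) \<Rightarrow> real" where
  "covariance p X Y = measure_pmf.expectation p
     (\<lambda>w. (X w - measure_pmf.expectation p X) * (Y w - measure_pmf.expectation p Y))"

definition quad :: "nat \<Rightarrow> nat \<Rightarrow> (bool \<times> nat \<times> nat \<Rightarrow> bool \<times> nat \<times> nat \<Rightarrow> real)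
                    \<Rightarrow> (bool \<Rightarrow> nat \<Rightarrow> nat \<Rightarrow> bool) \<Rightarrow> real" where
  "quad N K Q X = (\<Sum>u\<in>UNIV \<times> {..<N} \<times> {..<K}. \<Sum>v\<in>UNIV \<times> {..<N} \<times> {..<K}.
      of_bool (X (fst u) (fst (snd u)) (snd (snd u))) * Q u v *
      of_bool (X (fst v) (fst (snd v)) (snd (snd v))))"

definition constr_d :: "nat \<Rightarrow> nat \<Rightarrow> real \<Rightarrow> (nat \<Rightarrow> bool) \<Rightarrow> (bool \<Rightarrow> nat \<Rightarrow> nat \<Rightarrow> bool) \<Rightarrow> bool" where
  "constr_d N K \<epsilon> z X \<longleftrightarrow>
     (let N1 = real (card {i\<in>{..<N}. z i}); N0 = real N - N1 in
      \<forall>a. \<forall>k<K. \<bar>\<Sum>i<N. of_bool (X a i k) * (of_bool (z i) / N1 - (1 - of_bool (z i)) / N0)\<bar> \<le> \<epsilon>)"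

text \<open>Feasible set: binary X (supported on indices i<N, k<K) satisfying (a)--(d).
  supp a is the support of F_a.\<close>
definition feasible :: "nat \<Rightarrow> nat \<Rightarrow> (nat \<Rightarrow> real) \<Rightarrow> (bool \<Rightarrow> real set) \<Rightarrow> real
      \<Rightarrow> (nat \<Rightarrow> bool) \<Rightarrow> (nat \<Rightarrow> real) \<Rightarrow> (bool \<Rightarrow> nat \<Rightarrow> nat \<Rightarrow> bool) set" where
  "feasible N K y supp \<epsilon> z yobs = {X.
     (\<forall>a i k. (N \<le> i \<or> K \<le> k) \<longrightarrow> \<not> X a i k) \<and>
     (\<forall>i<N. \<forall>k<K. X (z i) i k \<longleftrightarrow> yobs i = y k) \<and>
     (\<forall>a. \<forall>i<N. \<forall>k<K. y k \<notin> supp a \<longrightarrow> \<not> X a i k) \<and>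
     (\<forall>a. \<forall>i<N. card {k\<in>{..<K}. X a i k} = 1) \<and>
     constr_d N K \<epsilon> z X}"

definition Vstar where
  "Vstar N K Q y supp \<epsilon> z yobs = Max ((quad N K Q) ` feasible N K y supp \<epsilon> z yobs)"

definition Xtrue :: "nat \<Rightarrow> nat \<Rightarrow> (nat \<Rightarrow> real) \<Rightarrow> (nat \<Rightarrow> real \<times> real) \<Rightarrow> bool \<Rightarrow> nat \<Rightarrow> nat \<Rightarrow> bool" where
  "Xtrue N K y ys a i k \<longleftrightarrow> i < N \<and> k < K \<and> po (ys i) a = y k"

end

theory Submission
  imports Defs
begin


lemma exp_quad:
  fixes y :: real assumes "\<bar>y\<bar> \<le> 1"
  shows "exp y \<le> 1 + y + (19/24) * y\<^sup>2"
proof -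
  obtain t where t: "\<bar>t\<bar> \<le> \<bar>y\<bar>" and e: "exp y = (\<Sum>m<4. (y ^ m) / fact m) + (exp t / fact 4) * y ^ 4"
    using Maclaurin_exp_le[of y 4] by blast
  have "exp t \<le> exp 1" using t assms by simp
  also have "\<dots> \<le> 3" by (rule exp_le)
  finally have et: "exp t \<le> 3" .
  have s: "(\<Sum>m<4. (y ^ m) / fact m) = 1 + y + y^2/2 + y^3/6"
    by (simp add: numeral_eq_Suc eval_nat_numeral fact_numeral)
  have y3: "y^3 \<le> y^2" 
  proof -
    have "y^3 = y * y^2" by (simp add: power3_eq_cube power2_eq_square)
    also have "\<dots> \<le> 1 * y^2" using assms by (intro mult_right_mono) auto
    finally show ?thesis by simp
  qed
  have y4: "y^4 \<le> y^2"
  proof -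
    have "y^4 = y^2 * y^2" by (simp add: power_add[symmetric])
    also have "\<dots> \<le> 1 * y^2" using assms
      using abs_square_le_1[of y] by (intro mult_right_mono) auto
    finally show ?thesis by simp
  qed
  have "(exp t / fact 4) * y ^ 4 \<le> (3/24) * y^4"
    using et by (intro mult_right_mono) (auto simp: fact_numeral)
  then show ?thesis using e s y3 y4 by (simp add: fact_numeral)
qed

lemma exp_conv:
  fixes t A :: real assumes "0 \<le> t" "t \<le> 1"
  shows "exp (t * A) \<le> 1 - t + t * exp A"
proof -
  have "exp ((1 - t) *\<^sub>R 0 + t *\<^sub>R A) \<le> (1 - t) * exp 0 + t * exp A"
    using assms by (intro convex_onD[OF exp_convex]) auto
  then show ?thesis by simp
qed

lemma cosh_mono:
  fixes a b :: real assumes "0 \<le> b" "b \<le> a"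
  shows "exp b + exp (-b) \<le> exp a + exp (-a)"
proof -
  have "exp a + exp (-a) - (exp b + exp (-b)) = (exp a - exp b) * (1 - exp (-(a+b)))"
    by (simp add: algebra_simps exp_add[symmetric] exp_diff exp_minus field_simps)
  moreover have "exp a - exp b \<ge> 0" using assms by simp
  moreover have "1 - exp (-(a+b)) \<ge> 0" using assms by simp
  ultimately show ?thesis by (metis diff_ge_0_iff_ge mult_nonneg_nonneg)
qed

lemma final_num:
  fixes x u :: real
  assumes x8: "exp x > 8" and u: "u \<ge> 48 * x / 25"
  shows "exp x * (exp (19/48 * u) - 1) \<le> exp u + exp (-u) - 2"
proof -
  have x1: "x > 1"
  proof (rule ccontr)
    assume "\<not> x > 1" then have "exp x \<le> exp 1" by simp
    with exp_le x8 show False by linarith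
  qed
  define A where "A = exp (x + 19/48*u)"
  define v where "v = 29/48*u - x"
  have v: "v \<ge> 4*x/25" using u unfolding v_def by linarith
  have eu: "exp u = A * exp v" unfolding A_def v_def by (simp add: exp_add[symmetric])
  have "exp (19/48*u) \<ge> exp (19*x/25)" using u by simp
  moreover have "exp (19*x/25) \<ge> 1 + 19*x/25" by (rule exp_ge_add_one_self)
  ultimately have e19: "exp (19/48*u) \<ge> 1 + 19*x/25" by linarith
  have A: "A \<ge> 8 * (1 + 19*x/25)" unfolding A_def exp_add
    using x8 e19 x1 by (intro mult_mono) auto
  have ev: "exp v - 1 \<ge> 4*x/25" using exp_ge_add_one_self[of v] v by linarith
  have "A * (exp v - 1) \<ge> 8 * (1 + 19*x/25) * (4*x/25)"
    using A ev x1 by (intro mult_mono) auto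
  moreover have "8 * (1 + 19*x/25) * (4*x/25) \<ge> 2"
  proof -
    have h: "(44/25) * (4/25) \<le> (1 + 19*x/25) * (4*x/25)" using x1 by (intro mult_mono) auto
    have "8 * ((1 + 19*x/25) * (4*x/25)) \<ge> 2" using h by linarith
    then show ?thesis by (simp only: mult.assoc)
  qed
  ultimately have "exp u - A \<ge> 2" using eu by (simp add: algebra_simps)
  moreover have "exp x * (exp (19/48 * u) - 1) \<le> A" unfolding A_def exp_add by simp
  moreover have "exp (-u) > 0" by simp
  ultimately show ?thesis by linarith
qed

lemma sig_bound:
  fixes n1 n0 NN ss MM :: real
  assumes "n1 + n0 = NN" "0 < ss" "ss \<le> MM" "ss \<le> NN - MM" "\<bar>n1 - MM\<bar> < ss/5" "2 * ss \<le> NN"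
  shows "12 * NN * ss \<le> 25 * n1 * n0" "n1 > 4 * ss/5" "n0 > 4 * ss/5"
proof -
  have a1: "n1 > MM - ss/5" "n1 < MM + ss/5" using assms(5) by linarith+
  show "n1 > 4 * ss/5" "n0 > 4 * ss/5" using assms a1 by linarith+
  define L where "L = MM - ss/5"
  define U where "U = MM + ss/5"
  have p1: "(n1 - L) * (U - n1) \<ge> 0" using a1 unfolding L_def U_def by simp
  have n0: "n0 = NN - n1" using assms(1) by simp
  have e1: "n1 * n0 \<ge> n1 * (NN - 2*MM) + L*U" using p1 unfolding n0 L_def U_def
    by (simp add: algebra_simps power2_eq_square) 
  show "12 * NN * ss \<le> 25 * n1 * n0"
  proof (cases "NN - 2*MM \<ge> 0")
    case True
    have "n1 * (NN - 2*MM) \<ge> L * (NN - 2*MM)" using True a1 unfolding L_def by (intro mult_right_mono) auto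
    then have e2: "n1 * n0 \<ge> L * (NN - MM + ss/5)" using e1 unfolding U_def by (simp add: algebra_simps)
    define R where "R = NN - MM + ss/5"
    have "(L - 4 * ss/5) * (R - 6 * ss/5) \<ge> 0" unfolding L_def R_def using assms by (intro mult_nonneg_nonneg) auto
    then have "L * R \<ge> (6 * ss/5)*L + (4 * ss/5)*R - 24 * ss * ss/25" by (simp add: algebra_simps)
    moreover have "L + R = NN" unfolding L_def R_def by simp
    moreover have "ss * L \<ge> ss * (4 * ss/5)" unfolding L_def using assms by (intro mult_left_mono) auto
    moreover have "ss * NN \<ge> ss * (2 * ss)" using assms by (intro mult_left_mono) auto
    moreover have "ss * L + ss * R = ss * NN" using \<open>L + R = NN\<close> by (simp add: distrib_left[symmetric])
    ultimately have "25 * (L * R) \<ge> 12 * (ss * NN)" by (simp add: algebra_simps) 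
    then show ?thesis using e2 unfolding R_def by (simp add: algebra_simps)
  next
    case False
    have "n1 * (NN - 2*MM) \<ge> U * (NN - 2*MM)" using False a1 unfolding U_def by (intro mult_right_mono_neg) auto
    then have e2: "n1 * n0 \<ge> U * (NN - MM - ss/5)" using e1 unfolding L_def by (simp add: algebra_simps)
    define R where "R = NN - MM - ss/5"
    have "(U - 6 * ss/5) * (R - 4 * ss/5) \<ge> 0" unfolding U_def R_def using assms by (intro mult_nonneg_nonneg) auto
    then have "U * R \<ge> (4 * ss/5)*U + (6 * ss/5)*R - 24 * ss * ss/25" by (simp add: algebra_simps)
    moreover have "U + R = NN" unfolding U_def R_def by simp
    moreover have "ss * R \<ge> ss * (4 * ss/5)" unfolding R_def using assms by (intro mult_left_mono) auto
    moreover have "ss * NN \<ge> ss * (2 * ss)" using assms by (intro mult_left_mono) auto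
    moreover have "ss * U + ss * R = ss * NN" using \<open>U + R = NN\<close> by (simp add: distrib_left[symmetric])
    ultimately have "25 * (U * R) \<ge> 12 * (ss * NN)" by (simp add: algebra_simps) 
    then show ?thesis using e2 unfolding R_def by (simp add: algebra_simps)
  qed
qed



lemma integrable_pmf_bounded:
  fixes f :: "'a \<Rightarrow> real"
  assumes "\<And>x. \<bar>f x\<bar> \<le> C"
  shows "integrable (measure_pmf p) f"
  by (rule measure_pmf.integrable_const_bound[where B=C]) (use assms in auto)

lemma mgf:
  fixes F :: "'b pmf" and B :: "'b \<Rightarrow> bool" and w :: "nat \<Rightarrow> real" and mu :: real
  assumes sw: "(\<Sum>i<N. w i) = 0" and bd: "\<forall>i<N. \<bar>mu * w i\<bar> \<le> 1"
  shows "measure_pmf.expectation (Pi_pmf {..<N} d (\<lambda>_. F))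
           (\<lambda>ys. exp (mu * (\<Sum>i<N. of_bool (B (ys i)) * w i)))
     \<le> exp (measure_pmf.prob F {p. B p} * (19/24) * mu\<^sup>2 * (\<Sum>i<N. (w i)\<^sup>2))"
proof -
  define q where "q = measure_pmf.prob F {p. B p}"
  have q01: "0 \<le> q" "q \<le> 1" unfolding q_def by auto
  define f where "f = (\<lambda>i v. 1 + (exp (mu * w i) - 1) * indicator {p. B p} v)"
  have fe: "exp (mu * (\<Sum>i<N. of_bool (B (ys i)) * w i)) = (\<Prod>i\<in>{..<N}. f i (ys i))" for ys
    unfolding f_def sum_distrib_left exp_sum[OF finite_lessThan]
    by (intro prod.cong) (auto simp: indicator_def)
  have int: "integrable (measure_pmf F) (f i)" for i
    unfolding f_def by (rule integrable_pmf_bounded[where C="1 + \<bar>exp (mu * w i) - 1\<bar>"]) (auto simp: indicator_def)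
  have ef: "measure_pmf.expectation F (f i) = 1 + (exp (mu * w i) - 1) * q" for i
  proof -
    have ii: "integrable (measure_pmf F) (indicator {p. B p} :: _ \<Rightarrow> real)"
      by (rule integrable_pmf_bounded[where C=1]) (auto simp: indicator_def)
    show ?thesis unfolding f_def q_def
      by (subst Bochner_Integration.integral_add) (auto simp: measure_pmf.prob_space ii)
  qed
  have fnn: "f i v \<ge> 0" for i v
    unfolding f_def by (auto simp: indicator_def)
  have "measure_pmf.expectation (Pi_pmf {..<N} d (\<lambda>_. F))
           (\<lambda>ys. exp (mu * (\<Sum>i<N. of_bool (B (ys i)) * w i)))
       = (\<Prod>i\<in>{..<N}. measure_pmf.expectation F (f i))"
    unfolding fe by (rule expectation_prod_Pi_pmf) (auto simp: int fnn)
  also have "\<dots> = (\<Prod>i\<in>{..<N}. 1 + (exp (mu * w i) - 1) * q)" by (simp add: ef)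
  also have "\<dots> \<le> (\<Prod>i\<in>{..<N}. exp (q * (mu * w i + (19/24) * (mu * w i)\<^sup>2)))"
  proof (rule prod_mono)
    fix i assume i: "i \<in> {..<N}"
    have "0 \<le> (1 - q) + q * exp (mu * w i)" using q01 by simp
    then have A: "0 \<le> 1 + (exp (mu * w i) - 1) * q" by (simp add: algebra_simps)
    have e1: "exp (mu * w i) - 1 \<le> mu * w i + (19/24) * (mu * w i)\<^sup>2"
      using exp_quad[of "mu * w i"] bd i by auto
    have "1 + (exp (mu * w i) - 1) * q \<le> exp ((exp (mu * w i) - 1) * q)"
      by (rule exp_ge_add_one_self)
    also have "\<dots> \<le> exp (q * (mu * w i + (19/24) * (mu * w i)\<^sup>2))"
      using e1 q01 by (simp add: mult.commute mult_left_mono)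
    finally show "0 \<le> 1 + (exp (mu * w i) - 1) * q \<and> 1 + (exp (mu * w i) - 1) * q \<le> exp (q * (mu * w i + (19/24) * (mu * w i)\<^sup>2))" using A by simp
  qed
  also have "\<dots> = exp (\<Sum>i<N. q * (mu * w i + (19/24) * (mu * w i)\<^sup>2))"
    by (simp add: exp_sum)
  also have "(\<Sum>i<N. q * (mu * w i + (19/24) * (mu * w i)\<^sup>2))
      = q * mu * (\<Sum>i<N. w i) + q * (19/24) * mu\<^sup>2 * (\<Sum>i<N. (w i)\<^sup>2)"
    by (simp add: sum.distrib sum_distrib_left algebra_simps power2_eq_square)
  finally show ?thesis using sw unfolding q_def by simp
qed



lemma sum_min_le1:
  fixes q :: "nat \<Rightarrow> real"
  assumes nn: "\<And>k. k < K \<Longrightarrow> q k \<ge> 0" and s1: "(\<Sum>k<K. q k) = 1"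
  shows "(\<Sum>k<K. min (q k) (1 - q k)) \<le> 1"
proof (cases "\<exists>k0<K. q k0 > 1/2")
  case True
  then obtain k0 where k0: "k0 < K" "q k0 > 1/2" by blast
  have "(\<Sum>k<K. min (q k) (1 - q k)) = min (q k0) (1 - q k0) + (\<Sum>k\<in>{..<K}-{k0}. min (q k) (1 - q k))"
    using k0 by (subst sum.remove[of _ k0]) auto
  also have "\<dots> \<le> (1 - q k0) + (\<Sum>k\<in>{..<K}-{k0}. q k)"
    by (intro add_mono sum_mono) auto
  also have "(\<Sum>k\<in>{..<K}-{k0}. q k) = 1 - q k0"
    using s1 k0 by (subst sum_diff1) auto
  finally show ?thesis using k0 by linarith
next
  case False
  have "(\<Sum>k<K. min (q k) (1 - q k)) \<le> (\<Sum>k<K. q k)" by (intro sum_mono) auto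
  then show ?thesis using s1 by simp
qed

lemma sum_of_bool_card:
  "finite A \<Longrightarrow> (\<Sum>k\<in>A. (of_bool (P k)::real)) = real (card {k\<in>A. P k})"
  by (simp add: of_bool_def sum.inter_filter[symmetric])

lemma sum_prob_one:
  fixes F :: "'b pmf" and V :: "'b \<Rightarrow> real" and y :: "nat \<Rightarrow> real" and K :: nat
  assumes "\<forall>p\<in>set_pmf F. card {k\<in>{..<K}. V p = y k} = 1"
  shows "(\<Sum>k<K. measure_pmf.prob F {p. V p = y k}) = 1"
proof -
  have ii: "integrable (measure_pmf F) (indicator A :: _ \<Rightarrow> real)" for A
    by (rule integrable_pmf_bounded[where C=1]) (auto simp: indicator_def)
  have "(\<Sum>k<K. measure_pmf.prob F {p. V p = y k})
      = (\<Sum>k<K. measure_pmf.expectation F (indicator {p. V p = y k}))" by simp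
  also have "\<dots> = measure_pmf.expectation F (\<lambda>p. \<Sum>k<K. indicator {p. V p = y k} p)"
    by (rule Bochner_Integration.integral_sum[symmetric]) (simp add: ii)
  also have "\<dots> = measure_pmf.expectation F (\<lambda>p. 1)"
  proof (rule integral_cong_AE)
    show "AE p in measure_pmf F. (\<Sum>k<K. indicator {p. V p = y k} p) = (1::real)"
    proof (rule AE_pmfI)
      fix p assume p: "p \<in> set_pmf F"
      have "(\<Sum>k<K. indicator {p. V p = y k} p) = (\<Sum>k<K. of_bool (V p = y k) :: real)"
        by (simp add: indicator_def)
      also have "\<dots> = real (card {k\<in>{..<K}. V p = y k})"
        by (rule sum_of_bool_card) simp
      finally show "(\<Sum>k<K. indicator {p. V p = y k} p) = (1::real)" using assms p by simp
    qed
  qed auto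
  also have "\<dots> = 1" by (simp add: measure_pmf.prob_space)
  finally show ?thesis .
qed



lemma Phi_pos:
  fixes u :: real assumes "u > 0" shows "exp u + exp (-u) - 2 > 0"
proof -
  have e: "exp u > 1" using assms by simp
  have "exp u + exp (-u) - 2 = (exp u - 1)^2 / exp u"
    by (simp add: exp_minus field_simps power2_eq_square)
  also have "\<dots> > 0" using e by simp
  finally show ?thesis .
qed

lemma abs_D_le:
  fixes w :: "nat \<Rightarrow> real"
  shows "\<bar>\<Sum>i<N. of_bool (b i) * w i\<bar> \<le> (\<Sum>i<N. \<bar>w i\<bar>)"
proof -
  have "\<bar>\<Sum>i<N. of_bool (b i) * w i\<bar> \<le> (\<Sum>i<N. \<bar>of_bool (b i) * w i\<bar>)" by (rule sum_abs)
  also have "\<dots> \<le> (\<Sum>i<N. \<bar>w i\<bar>)" by (intro sum_mono) auto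
  finally show ?thesis .
qed

lemma integrable_expD:
  fixes w :: "nat \<Rightarrow> real"
  shows "integrable (measure_pmf P) (\<lambda>ys. exp (mu * (\<Sum>i<N. of_bool (B (ys i)) * w i)))"
proof (rule integrable_pmf_bounded[where C="exp (\<bar>mu\<bar> * (\<Sum>i<N. \<bar>w i\<bar>))"])
  fix ys
  have "mu * (\<Sum>i<N. of_bool (B (ys i)) * w i) \<le> \<bar>mu\<bar> * \<bar>\<Sum>i<N. of_bool (B (ys i)) * w i\<bar>"
    by (metis abs_ge_self abs_mult)
  also have "\<dots> \<le> \<bar>mu\<bar> * (\<Sum>i<N. \<bar>w i\<bar>)" by (intro mult_left_mono abs_D_le) auto
  finally show "\<bar>exp (mu * (\<Sum>i<N. of_bool (B (ys i)) * w i))\<bar> \<le> exp (\<bar>mu\<bar> * (\<Sum>i<N. \<bar>w i\<bar>))"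
    by simp
qed

lemma mgf_min:
  fixes F :: "'b pmf" and B :: "'b \<Rightarrow> bool" and w :: "nat \<Rightarrow> real" and mu :: real
  assumes sw: "(\<Sum>i<N. w i) = 0" and bd: "\<forall>i<N. \<bar>mu * w i\<bar> \<le> 1"
  defines "q \<equiv> measure_pmf.prob F {p. B p}"
  shows "measure_pmf.expectation (Pi_pmf {..<N} d (\<lambda>_. F))
           (\<lambda>ys. exp (mu * (\<Sum>i<N. of_bool (B (ys i)) * w i)))
     \<le> exp (min q (1 - q) * ((19/24) * mu\<^sup>2 * (\<Sum>i<N. (w i)\<^sup>2)))"
proof -
  define c where "c = (19/24) * mu\<^sup>2 * (\<Sum>i<N. (w i)\<^sup>2)"
  have c0: "c \<ge> 0" unfolding c_def by (intro mult_nonneg_nonneg sum_nonneg) auto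
  have m1: "measure_pmf.expectation (Pi_pmf {..<N} d (\<lambda>_. F))
           (\<lambda>ys. exp (mu * (\<Sum>i<N. of_bool (B (ys i)) * w i))) \<le> exp (q * c)"
    using mgf[OF sw bd, where B=B and d=d and F=F] unfolding q_def c_def by (simp only: mult.assoc)
  have bd': "\<forall>i<N. \<bar>(-mu) * w i\<bar> \<le> 1" using bd by simp
  have eq: "mu * (\<Sum>i<N. of_bool (B (ys i)) * w i) = (-mu) * (\<Sum>i<N. of_bool (\<not> B (ys i)) * w i)" for ys
  proof -
    have "(\<Sum>i<N. of_bool (\<not> B (ys i)) * w i) = (\<Sum>i<N. w i - of_bool (B (ys i)) * w i)"
      by (intro sum.cong) auto
    also have "\<dots> = - (\<Sum>i<N. of_bool (B (ys i)) * w i)" using sw by (simp add: sum_subtractf)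
    finally show ?thesis by simp
  qed
  have qc: "measure_pmf.prob F {p. \<not> B p} = 1 - q"
  proof -
    have "{p. \<not> B p} = UNIV - {p. B p}" by auto
    then show ?thesis unfolding q_def using measure_pmf.prob_compl[of "{p. B p}" F] by simp
  qed
  have m2: "measure_pmf.expectation (Pi_pmf {..<N} d (\<lambda>_. F))
           (\<lambda>ys. exp (mu * (\<Sum>i<N. of_bool (B (ys i)) * w i))) \<le> exp ((1 - q) * c)"
    using mgf[OF sw bd', where B="\<lambda>p. \<not> B p" and d=d and F=F] unfolding eq qc c_def by (simp only: power2_minus mult.assoc)
  show ?thesis
  proof (cases "q \<le> 1 - q")
    case True then show ?thesis using m1 unfolding c_def[symmetric] by simp
  next
    case False then show ?thesis using m2 unfolding c_def[symmetric] by simp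
  qed
qed



lemma arm_bound:
  fixes F :: "'b pmf" and V :: "'b \<Rightarrow> real" and y :: "nat \<Rightarrow> real" and K N :: nat
    and w :: "nat \<Rightarrow> real" and eps sig2 :: real
  assumes card1: "\<forall>p\<in>set_pmf F. card {k\<in>{..<K}. V p = y k} = 1"
    and sw: "(\<Sum>i<N. w i) = 0" and ws: "(\<Sum>i<N. (w i)\<^sup>2) = sig2" and sig: "sig2 > 0"
    and wb: "\<forall>i<N. \<bar>w i\<bar> \<le> sig2" and eps: "0 < eps" "eps \<le> 1"
  defines "u \<equiv> eps\<^sup>2 / sig2"
  shows "(\<Sum>k<K. measure_pmf.prob (Pi_pmf {..<N} d (\<lambda>_. F))
            {ys. \<bar>\<Sum>i<N. of_bool (V (ys i) = y k) * w i\<bar> > eps})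
         \<le> 4 * (exp (19/48 * u) - 1) / (exp u + exp (-u) - 2)"
proof -
  define P where "P = Pi_pmf {..<N} d (\<lambda>_. F)"
  define lam where "lam = eps / sig2"
  define q where "q k = measure_pmf.prob F {p. V p = y k}" for k
  define m where "m k = min (q k) (1 - q k)" for k
  define Phi where "Phi = exp u + exp (-u) - 2"
  define C where "C = exp (19/48 * u) - 1"
  have u0: "u > 0" unfolding u_def using eps sig by simp
  have Phi0: "Phi > 0" unfolding Phi_def using Phi_pos[OF u0] .
  have C0: "C \<ge> 0" unfolding C_def using u0 by simp
  have lam_eps: "lam * eps = u" unfolding lam_def u_def by (simp add: power2_eq_square)
  have lam_sq: "(19/24) * lam\<^sup>2 * (\<Sum>i<N. (w i)\<^sup>2) = (19/24) * u"
    unfolding ws lam_def u_def using sig by (simp add: power2_eq_square field_simps)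
  have bd: "\<forall>i<N. \<bar>lam * w i\<bar> \<le> 1"
  proof (intro allI impI)
    fix i assume i: "i < N"
    have "\<bar>lam * w i\<bar> = eps / sig2 * \<bar>w i\<bar>" unfolding lam_def using eps sig by (simp add: abs_mult)
    also have "\<dots> \<le> eps / sig2 * sig2" using wb i eps sig by (intro mult_left_mono) auto
    also have "\<dots> = eps" using sig by simp
    finally show "\<bar>lam * w i\<bar> \<le> 1" using eps by simp
  qed
  have bdm: "\<forall>i<N. \<bar>(-lam) * w i\<bar> \<le> 1" using bd by simp
  have m01: "0 \<le> m k" "m k \<le> 1/2" for k unfolding m_def q_def by (auto simp: min_def)
  have key: "measure_pmf.expectation P (\<lambda>ys. exp (mu * (\<Sum>i<N. of_bool (V (ys i) = y k) * w i))) - 1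
      \<le> 2 * m k * C" if mu: "mu = lam \<or> mu = -lam" for k mu
  proof -
    have bdmu: "\<forall>i<N. \<bar>mu * w i\<bar> \<le> 1" using mu bd bdm by auto
    have "measure_pmf.expectation P (\<lambda>ys. exp (mu * (\<Sum>i<N. of_bool (V (ys i) = y k) * w i)))
        \<le> exp (m k * ((19/24) * mu\<^sup>2 * (\<Sum>i<N. (w i)\<^sup>2)))"
      unfolding P_def m_def q_def by (rule mgf_min[OF sw bdmu])
    also have "(19/24) * mu\<^sup>2 * (\<Sum>i<N. (w i)\<^sup>2) = (19/24) * u" using mu lam_sq by auto
    also have "exp (m k * ((19/24) * u)) = exp ((2 * m k) * (19/48 * u))" by (simp add: algebra_simps)
    also have "\<dots> \<le> 1 - 2 * m k + 2 * m k * exp (19/48 * u)"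
      using m01[of k] by (intro exp_conv) auto
    finally show ?thesis unfolding C_def by (simp add: algebra_simps)
  qed
  have perk: "measure_pmf.prob P {ys. \<bar>\<Sum>i<N. of_bool (V (ys i) = y k) * w i\<bar> > eps}
      \<le> 4 * m k * C / Phi" for k
  proof -
    define D where "D ys = (\<Sum>i<N. of_bool (V (ys i) = y k) * w i)" for ys
    define g where "g ys = exp (lam * D ys) + exp (- lam * D ys) - 2" for ys
    define A where "A = {ys. \<bar>D ys\<bar> > eps}"
    have ip: "integrable (measure_pmf P) (\<lambda>ys. exp (lam * D ys))" unfolding D_def by (rule integrable_expD)
    have im: "integrable (measure_pmf P) (\<lambda>ys. exp (- lam * D ys))" unfolding D_def by (rule integrable_expD)
    have ii: "integrable (measure_pmf P) (indicator A :: _ \<Rightarrow> real)"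
      by (rule integrable_pmf_bounded[where C=1]) (auto simp: indicator_def)
    have ig: "integrable (measure_pmf P) g" unfolding g_def using ip im by simp
    have lam0: "lam > 0" unfolding lam_def using eps sig by simp
    have pw: "Phi * indicator A ys \<le> g ys" for ys
    proof (cases "ys \<in> A")
      case True
      then have Dg: "\<bar>D ys\<bar> > eps" unfolding A_def by simp
      have "exp (lam * eps) + exp (- (lam * eps)) \<le> exp (lam * \<bar>D ys\<bar>) + exp (- (lam * \<bar>D ys\<bar>))"
        using Dg lam0 eps by (intro cosh_mono) auto
      moreover have "exp (lam * \<bar>D ys\<bar>) + exp (- (lam * \<bar>D ys\<bar>)) = exp (lam * D ys) + exp (- lam * D ys)"
        by (cases "D ys \<ge> 0") auto
      ultimately show ?thesis using True unfolding Phi_def g_def lam_eps[symmetric] by simp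
    next
      case False
      have "exp 0 + exp (- 0) \<le> exp (lam * \<bar>D ys\<bar>) + exp (- (lam * \<bar>D ys\<bar>))"
        using lam0 by (intro cosh_mono) auto
      moreover have "exp (lam * \<bar>D ys\<bar>) + exp (- (lam * \<bar>D ys\<bar>)) = exp (lam * D ys) + exp (- lam * D ys)"
        by (cases "D ys \<ge> 0") auto
      ultimately show ?thesis using False unfolding g_def by simp
    qed
    have "Phi * measure_pmf.prob P A = measure_pmf.expectation P (\<lambda>ys. Phi * indicator A ys)"
      by simp
    also have "\<dots> \<le> measure_pmf.expectation P g"
      using ii ig pw by (intro integral_mono) auto
    also have "\<dots> = (measure_pmf.expectation P (\<lambda>ys. exp (lam * D ys)) - 1)
                  + (measure_pmf.expectation P (\<lambda>ys. exp (- lam * D ys)) - 1)"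
      unfolding g_def using ip im by (simp add: measure_pmf.prob_space)
    also have "\<dots> \<le> 2 * m k * C + 2 * m k * C"
      using key[of lam k] key[of "-lam" k] unfolding D_def by (intro add_mono) auto
    finally have "Phi * measure_pmf.prob P A \<le> 4 * m k * C" by (simp add: algebra_simps)
    then show ?thesis unfolding A_def D_def using Phi0 by (simp add: field_simps)
  qed
  have "(\<Sum>k<K. measure_pmf.prob P {ys. \<bar>\<Sum>i<N. of_bool (V (ys i) = y k) * w i\<bar> > eps})
      \<le> (\<Sum>k<K. 4 * C / Phi * m k)" using perk by (intro sum_mono) (simp add: field_simps)
  also have "\<dots> = 4 * C / Phi * (\<Sum>k<K. m k)" by (simp add: sum_distrib_left)
  also have "\<dots> \<le> 4 * C / Phi * 1"
  proof (intro mult_left_mono)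
    show "(\<Sum>k<K. m k) \<le> 1" unfolding m_def
      by (rule sum_min_le1) (auto simp: q_def sum_prob_one[OF card1])
  qed (use C0 Phi0 in auto)
  finally show ?thesis unfolding P_def C_def Phi_def by simp
qed



lemma var_sum_cov:
  fixes pZ :: "(nat \<Rightarrow> bool) pmf"
  shows "measure_pmf.variance pZ (\<lambda>z. \<Sum>i<N. of_bool (z i) :: real)
       = (\<Sum>i<N. \<Sum>j<N. covariance pZ (\<lambda>z. of_bool (z i)) (\<lambda>z. of_bool (z j)))"
proof -
  define Zi where "Zi i z = (of_bool (z i) :: real)" for i :: nat and z :: "nat \<Rightarrow> bool"
  define mu where "mu i = measure_pmf.expectation pZ (Zi i)" for i
  have iZ: "integrable (measure_pmf pZ) (Zi i)" for i
    unfolding Zi_def by (rule integrable_pmf_bounded[where C=1]) auto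
  have Ef: "measure_pmf.expectation pZ (\<lambda>z. \<Sum>i<N. Zi i z) = (\<Sum>i<N. mu i)"
    unfolding mu_def by (rule Bochner_Integration.integral_sum) (simp add: iZ)
  have sq: "((\<Sum>i<N. Zi i z) - (\<Sum>i<N. mu i))\<^sup>2 = (\<Sum>i<N. \<Sum>j<N. (Zi i z - mu i) * (Zi j z - mu j))" for z
  proof -
    have "(\<Sum>i<N. Zi i z) - (\<Sum>i<N. mu i) = (\<Sum>i<N. Zi i z - mu i)" by (simp add: sum_subtractf)
    then show ?thesis by (simp add: power2_eq_square sum_product)
  qed
  have ip2: "integrable (measure_pmf pZ) (\<lambda>z. (Zi i z - mu i) * (Zi j z - mu j))" for i j
    by (rule integrable_pmf_bounded[where C="(1 + \<bar>mu i\<bar>) * (1 + \<bar>mu j\<bar>)"])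
       (auto simp: Zi_def abs_mult intro!: mult_mono)
  have "measure_pmf.variance pZ (\<lambda>z. \<Sum>i<N. Zi i z)
      = measure_pmf.expectation pZ (\<lambda>z. \<Sum>i<N. \<Sum>j<N. (Zi i z - mu i) * (Zi j z - mu j))"
    unfolding Ef sq by simp
  also have "\<dots> = (\<Sum>i<N. measure_pmf.expectation pZ (\<lambda>z. \<Sum>j<N. (Zi i z - mu i) * (Zi j z - mu j)))"
    by (rule Bochner_Integration.integral_sum) (use ip2 in auto)
  also have "\<dots> = (\<Sum>i<N. \<Sum>j<N. measure_pmf.expectation pZ (\<lambda>z. (Zi i z - mu i) * (Zi j z - mu j)))"
    by (intro sum.cong refl Bochner_Integration.integral_sum) (use ip2 in auto)
  finally show ?thesis unfolding Zi_def mu_def covariance_def by simp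
qed

lemma cheb_N1:
  fixes pZ :: "(nat \<Rightarrow> bool) pmf" and a :: real
  assumes "a > 0"
  shows "measure_pmf.prob pZ {z. a \<le> \<bar>(\<Sum>i<N. of_bool (z i) :: real) - (\<Sum>i<N. measure_pmf.prob pZ {z. z i})\<bar>}
     \<le> (\<Sum>i<N. \<Sum>j<N. covariance pZ (\<lambda>z. of_bool (z i)) (\<lambda>z. of_bool (z j))) / a\<^sup>2"
proof -
  define f where "f z = (\<Sum>i<N. of_bool (z i) :: real)" for z
  have iZ: "integrable (measure_pmf pZ) (\<lambda>z. of_bool (z i) :: real)" for i :: nat
    by (rule integrable_pmf_bounded[where C=1]) auto
  have Ef: "measure_pmf.expectation pZ f = (\<Sum>i<N. measure_pmf.prob pZ {z. z i})"
  proof -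
    have "measure_pmf.expectation pZ f = (\<Sum>i<N. measure_pmf.expectation pZ (\<lambda>z. of_bool (z i) :: real))"
      unfolding f_def by (rule Bochner_Integration.integral_sum) (simp add: iZ)
    also have "\<dots> = (\<Sum>i<N. measure_pmf.prob pZ {z. z i})"
    proof (intro sum.cong refl)
      fix i :: nat
      have "(\<lambda>z. of_bool (z i) :: real) = indicator {z. z i}" by (auto simp: indicator_def)
      then show "measure_pmf.expectation pZ (\<lambda>z. of_bool (z i) :: real) = measure_pmf.prob pZ {z. z i}"
        by simp
    qed
    finally show ?thesis .
  qed
  have i2: "integrable (measure_pmf pZ) (\<lambda>z. (f z)^2)"
  proof (rule integrable_pmf_bounded[where C="real N ^ 2"])
    fix z
    have "f z \<le> (\<Sum>i<N. 1)" unfolding f_def by (intro sum_mono) auto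
    moreover have "0 \<le> f z" unfolding f_def by (intro sum_nonneg) auto
    ultimately show "\<bar>(f z)^2\<bar> \<le> real N ^ 2" by (simp add: power_mono)
  qed
  have V: "measure_pmf.variance pZ f = (\<Sum>i<N. \<Sum>j<N. covariance pZ (\<lambda>z. of_bool (z i)) (\<lambda>z. of_bool (z j)))"
    unfolding f_def by (rule var_sum_cov)
  have "measure_pmf.prob pZ {z. a \<le> \<bar>f z - (\<Sum>i<N. measure_pmf.prob pZ {z. z i})\<bar>}
      = measure_pmf.prob pZ {z \<in> space (measure_pmf pZ). a \<le> \<bar>f z - measure_pmf.expectation pZ f\<bar>}"
    using Ef by simp
  also have "\<dots> \<le> measure_pmf.variance pZ f / a\<^sup>2"
    by (rule measure_pmf.Chebyshev_inequality) (use assms i2 in auto)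
  also have "\<dots> = (\<Sum>i<N. \<Sum>j<N. covariance pZ (\<lambda>z. of_bool (z i)) (\<lambda>z. of_bool (z j))) / a\<^sup>2"
    by (simp only: V)
  finally show ?thesis unfolding f_def .
qed

lemma cov_nonneg:
  fixes pZ :: "(nat \<Rightarrow> bool) pmf"
  shows "(\<Sum>i<N. \<Sum>j<N. covariance pZ (\<lambda>z. of_bool (z i)) (\<lambda>z. of_bool (z j))) \<ge> 0"
  unfolding var_sum_cov[symmetric] by simp



lemma prob_pair_le:
  fixes A :: "'a pmf" and B :: "'b pmf" and h :: "'a \<Rightarrow> real"
  assumes hb: "\<And>z. measure_pmf.prob B {y. (z,y) \<in> S} \<le> h z" and h0: "\<And>z. h z \<ge> 0" and hC: "\<And>z. h z \<le> C"
  shows "measure_pmf.prob (pair_pmf A B) S \<le> measure_pmf.expectation A h"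
proof -
  have ih: "integrable (measure_pmf A) h"
    by (rule integrable_pmf_bounded[where C=C]) (use h0 hC in \<open>auto intro: order.trans\<close>)
  have "ennreal (measure_pmf.prob (pair_pmf A B) S) = emeasure (measure_pmf (pair_pmf A B)) S"
    by (simp add: measure_pmf.emeasure_eq_measure)
  also have "\<dots> = (\<integral>\<^sup>+x. indicator S x \<partial>pair_pmf A B)" by simp
  also have "\<dots> = (\<integral>\<^sup>+a. \<integral>\<^sup>+b. indicator S (a, b) \<partial>B \<partial>A)" by (rule nn_integral_pair_pmf')
  also have "\<dots> = (\<integral>\<^sup>+a. emeasure (measure_pmf B) {b. (a,b) \<in> S} \<partial>A)"
  proof (intro nn_integral_cong)
    fix a
    have "(\<lambda>b. indicator S (a, b) :: ennreal) = indicator {b. (a,b) \<in> S}" by (auto simp: indicator_def)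
    then show "(\<integral>\<^sup>+b. indicator S (a, b) \<partial>B) = emeasure (measure_pmf B) {b. (a,b) \<in> S}" by simp
  qed
  also have "\<dots> \<le> (\<integral>\<^sup>+a. ennreal (h a) \<partial>A)"
    by (intro nn_integral_mono) (simp add: measure_pmf.emeasure_eq_measure ennreal_leI hb)
  also have "\<dots> = ennreal (measure_pmf.expectation A h)"
    by (rule nn_integral_eq_integral) (use ih h0 in auto)
  finally show ?thesis
    using h0 by (simp add: ennreal_le_iff Bochner_Integration.integral_nonneg)
qed

lemma weights:
  fixes z :: "nat \<Rightarrow> bool" and N :: nat and b :: "nat \<Rightarrow> bool"
  defines "n1 \<equiv> real (card {i\<in>{..<N}. z i})"
  defines "n0 \<equiv> real N - n1"
  defines "w \<equiv> (\<lambda>i. of_bool (z i) / n1 - (1 - of_bool (z i)) / n0)"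
  assumes p1: "n1 > 0" and p0: "n0 > 0"
  shows "(\<Sum>i<N. w i) = 0" "(\<Sum>i<N. (w i)\<^sup>2) = 1/n1 + 1/n0"
    "\<forall>i. \<bar>w i\<bar> \<le> 1/n1 + 1/n0" "\<bar>\<Sum>i<N. of_bool (b i) * w i\<bar> \<le> 1"
proof -
  have s1: "(\<Sum>i<N. of_bool (z i) :: real) = n1" unfolding n1_def by (rule sum_of_bool_card) simp
  have s0: "(\<Sum>i<N. 1 - of_bool (z i) :: real) = n0" unfolding n0_def using s1 by (simp add: sum_subtractf)
  show "(\<Sum>i<N. w i) = 0" unfolding w_def
    using s1 s0 p1 p0 by (simp add: sum_subtractf sum_divide_distrib[symmetric])
  have wsq: "(w i)\<^sup>2 = of_bool (z i) / n1\<^sup>2 + (1 - of_bool (z i)) / n0\<^sup>2" for i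
    unfolding w_def by (cases "z i") (auto simp: power2_eq_square)
  show "(\<Sum>i<N. (w i)\<^sup>2) = 1/n1 + 1/n0"
    unfolding wsq using s1 s0 p1 p0 by (simp add: sum.distrib sum_divide_distrib[symmetric] power2_eq_square)
  show "\<forall>i. \<bar>w i\<bar> \<le> 1/n1 + 1/n0"
    using p1 p0 unfolding w_def by (auto simp: abs_if)
  define T where "T = (\<Sum>i<N. of_bool (b i) * of_bool (z i) :: real)"
  define C where "C = (\<Sum>i<N. of_bool (b i) * (1 - of_bool (z i)) :: real)"
  have T: "0 \<le> T" "T \<le> n1" unfolding T_def s1[symmetric]
    by (intro sum_nonneg sum_mono; simp)+
  have C: "0 \<le> C" "C \<le> n0" unfolding C_def s0[symmetric]
    by (intro sum_nonneg sum_mono; simp)+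
  have "(\<Sum>i<N. of_bool (b i) * w i) = T / n1 - C / n0"
    unfolding w_def T_def C_def by (simp add: sum_subtractf sum_divide_distrib[symmetric] algebra_simps)
  moreover have "T / n1 \<le> 1" "0 \<le> T / n1" "C / n0 \<le> 1" "0 \<le> C / n0" using T C p1 p0 by auto
  ultimately show "\<bar>\<Sum>i<N. of_bool (b i) * w i\<bar> \<le> 1" by linarith
qed



lemma card1_lemma:
  fixes y :: "nat \<Rightarrow> real"
  assumes "v \<in> y ` {..<K}" "inj_on y {..<K}"
  shows "card {k\<in>{..<K}. v = y k} = 1"
proof -
  obtain k0 where k0: "k0 < K" "v = y k0" using assms(1) by auto
  have "{k\<in>{..<K}. v = y k} = {k0}"
    using k0 assms(2) by (auto simp: inj_on_def)
  then show ?thesis by simp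
qed

lemma po_in:
  assumes "p \<in> set_pmf F" "set_pmf F \<subseteq> (y ` {..<K}) \<times> (y ` {..<K})"
  shows "po p a \<in> y ` {..<K}"
  using assms unfolding po_def by (cases p) auto

lemma finite_feasible: "finite (feasible N K y supp \<epsilon> z yobs)"
proof (rule finite_subset)
  show "feasible N K y supp \<epsilon> z yobs \<subseteq> (\<lambda>S a i k. (a,i,k) \<in> S) ` Pow (UNIV \<times> {..<N} \<times> {..<K})"
  proof
    fix X assume X: "X \<in> feasible N K y supp \<epsilon> z yobs"
    then have sub0: "\<forall>a i k. (N \<le> i \<or> K \<le> k) \<longrightarrow> \<not> X a i k" unfolding feasible_def by blast
    have sub: "\<And>a i k. X a i k \<Longrightarrow> i < N \<and> k < K" using sub0 by (meson not_le)
    have "X = (\<lambda>a i k. (a,i,k) \<in> {(a,i,k). X a i k})" by auto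
    moreover have "{(a,i,k). X a i k} \<in> Pow (UNIV \<times> {..<N} \<times> {..<K})" using sub by auto
    ultimately show "X \<in> (\<lambda>S a i k. (a,i,k) \<in> S) ` Pow (UNIV \<times> {..<N} \<times> {..<K})" by blast
  qed
qed auto

lemma Xtrue_feasible:
  fixes F :: "(real \<times> real) pmf"
  assumes ysF: "\<forall>i<N. ys i \<in> set_pmf F" and Fs: "set_pmf F \<subseteq> (y ` {..<K}) \<times> (y ` {..<K})"
    and inj: "inj_on y {..<K}" and cd: "constr_d N K \<epsilon> z (Xtrue N K y ys)"
  shows "Xtrue N K y ys \<in> feasible N K y (\<lambda>a. set_pmf (map_pmf (\<lambda>p. po p a) F)) \<epsilon> z (Yobs z ys)"
proof -
  have c4: "card {k\<in>{..<K}. Xtrue N K y ys a i k} = 1" if i: "i < N" for a i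
  proof -
    have "{k\<in>{..<K}. Xtrue N K y ys a i k} = {k\<in>{..<K}. po (ys i) a = y k}"
      using i unfolding Xtrue_def by auto
    also have "card \<dots> = 1" using po_in[OF _ Fs] ysF i inj by (intro card1_lemma) auto
    finally show ?thesis .
  qed
  have c3: "y k \<in> set_pmf (map_pmf (\<lambda>p. po p a) F)" if "i < N" "Xtrue N K y ys a i k" for a i k
    using that ysF unfolding Xtrue_def by (auto intro!: image_eqI[where x="ys i"])
  show ?thesis unfolding feasible_def
    using c4 c3 cd by (auto simp: Xtrue_def Yobs_def)
qed



lemma goodz_bound:
  fixes F :: "(real \<times> real) pmf" and z :: "nat \<Rightarrow> bool" and y :: "nat \<Rightarrow> real"
    and \<epsilon> s x :: real
  assumes Fs: "set_pmf F \<subseteq> (y ` {..<K}) \<times> (y ` {..<K})" and inj: "inj_on y {..<K}"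
    and eps: "\<epsilon> > 0" and x8: "exp x > 8" and xdef: "x = \<epsilon>\<^sup>2 * s / 4" and s0: "s > 0"
    and p1: "real (card {i\<in>{..<N}. z i}) > 0" and p0: "real N - real (card {i\<in>{..<N}. z i}) > 0"
    and prod: "12 * real N * s \<le> 25 * real (card {i\<in>{..<N}. z i}) * (real N - real (card {i\<in>{..<N}. z i}))"
  shows "measure_pmf.prob (Pi_pmf {..<N} (0,0) (\<lambda>_. F)) {ys. \<not> constr_d N K \<epsilon> z (Xtrue N K y ys)}
     \<le> 8 * exp (-x)"
proof -
  define n1 where "n1 = real (card {i\<in>{..<N}. z i})"
  define n0 where "n0 = real N - n1"
  define w where "w = (\<lambda>i. of_bool (z i) / n1 - (1 - of_bool (z i)) / n0)"
  define sig2 where "sig2 = 1/n1 + 1/n0"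
  define P where "P = Pi_pmf {..<N} (0::real,0::real) (\<lambda>_. F)"
  define E where "E a k = {ys. \<epsilon> < \<bar>\<Sum>i<N. of_bool (po (ys i) a = y k) * w i\<bar>}" for a k
  have n1p: "n1 > 0" and n0p: "n0 > 0" using p1 p0 unfolding n1_def n0_def by auto
  have W: "(\<Sum>i<N. w i) = 0" "(\<Sum>i<N. (w i)\<^sup>2) = 1/n1 + 1/n0"
    "\<forall>i. \<bar>w i\<bar> \<le> 1/n1 + 1/n0" "\<And>b. \<bar>\<Sum>i<N. of_bool (b i) * w i\<bar> \<le> 1"
    using weights[where z=z and N=N] p1 p0 unfolding w_def n0_def n1_def by blast+
  have sig0: "sig2 > 0" unfolding sig2_def using n1p n0p by (intro add_pos_pos) auto
  have sumeq: "(\<Sum>i<N. of_bool (Xtrue N K y ys a i k) * (of_bool (z i) / n1 - (1 - of_bool (z i)) / n0))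
        = (\<Sum>i<N. of_bool (po (ys i) a = y k) * w i)" if "k < K" for ys a k
    unfolding w_def using that by (intro sum.cong) (auto simp: Xtrue_def)
  have cd: "constr_d N K \<epsilon> z (Xtrue N K y ys) \<longleftrightarrow>
      (\<forall>a. \<forall>k<K. \<bar>\<Sum>i<N. of_bool (po (ys i) a = y k) * w i\<bar> \<le> \<epsilon>)" for ys
  proof -
    have "constr_d N K \<epsilon> z (Xtrue N K y ys) \<longleftrightarrow>
      (\<forall>a. \<forall>k<K. \<bar>\<Sum>i<N. of_bool (Xtrue N K y ys a i k) * (of_bool (z i) / n1 - (1 - of_bool (z i)) / n0)\<bar> \<le> \<epsilon>)"
      unfolding constr_d_def Let_def n0_def n1_def ..
    also have "\<dots> \<longleftrightarrow> (\<forall>a. \<forall>k<K. \<bar>\<Sum>i<N. of_bool (po (ys i) a = y k) * w i\<bar> \<le> \<epsilon>)"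
      using sumeq by auto
    finally show ?thesis .
  qed
  have eqset: "{ys. \<not> constr_d N K \<epsilon> z (Xtrue N K y ys)} = (\<Union>a\<in>UNIV. \<Union>k\<in>{..<K}. E a k)"
    unfolding E_def cd by (auto simp: not_le)
  show ?thesis
  proof (cases "\<epsilon> \<le> 1")
    case False
    have "E a k = {}" for a k
    proof -
      have "\<not> \<epsilon> < \<bar>\<Sum>i<N. of_bool (po (ys i) a = y k) * w i\<bar>" for ys
        using W(4)[of "\<lambda>i. po (ys i) a = y k"] False by linarith
      then show ?thesis unfolding E_def by blast
    qed
    then have "{ys. \<not> constr_d N K \<epsilon> z (Xtrue N K y ys)} = {}" unfolding eqset by simp
    then show ?thesis by simp
  next
    case True
    define u where "u = \<epsilon>\<^sup>2 / sig2"
    define C where "C = exp (19/48 * u) - 1"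
    define Phi where "Phi = exp u + exp (-u) - 2"
    have u0: "u > 0" unfolding u_def using eps sig0 by simp
    have Phi0: "Phi > 0" unfolding Phi_def by (rule Phi_pos[OF u0])
    have arm: "(\<Sum>k<K. measure_pmf.prob P (E a k)) \<le> 4 * C / Phi" for a
      unfolding P_def E_def C_def Phi_def u_def
    proof (rule arm_bound[where V="\<lambda>p. po p a", OF _ W(1) _ sig0 _ eps True])
      show "\<forall>p\<in>set_pmf F. card {k \<in> {..<K}. po p a = y k} = 1"
      proof
        fix p assume p: "p \<in> set_pmf F"
        show "card {k \<in> {..<K}. po p a = y k} = 1" by (rule card1_lemma[OF po_in[OF p Fs] inj])
      qed
      show "(\<Sum>i<N. (w i)\<^sup>2) = sig2" using W(2) unfolding sig2_def .
      show "\<forall>i<N. \<bar>w i\<bar> \<le> sig2" using W(3) unfolding sig2_def by auto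
    qed
    have "measure_pmf.prob P {ys. \<not> constr_d N K \<epsilon> z (Xtrue N K y ys)}
        \<le> (\<Sum>a\<in>UNIV. measure_pmf.prob P (\<Union>k\<in>{..<K}. E a k))"
      unfolding eqset by (rule measure_pmf.finite_measure_subadditive_finite) auto
    also have "\<dots> \<le> (\<Sum>a\<in>UNIV. \<Sum>k<K. measure_pmf.prob P (E a k))"
      by (intro sum_mono measure_pmf.finite_measure_subadditive_finite) auto
    also have "\<dots> \<le> (\<Sum>a\<in>(UNIV::bool set). 4 * C / Phi)"
      by (intro sum_mono arm)
    also have "\<dots> = 8 * (C / Phi)" by simp
    also have "\<dots> \<le> 8 * exp (-x)"
    proof -
      have "sig2 = real N / (n1 * n0)" unfolding sig2_def n0_def using n1p n0p n0_def
        by (simp add: field_simps)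
      have sig_le: "sig2 * (12 * s) \<le> 25"
      proof -
        have "sig2 * (12 * s) = 12 * real N * s / (n1 * n0)"
          unfolding sig2_def using n1p n0p n0_def by (simp add: field_simps)
        also have "\<dots> \<le> 25" using prod n1p n0p unfolding n1_def[symmetric] n0_def[symmetric]
          by (simp add: field_simps)
        finally show ?thesis .
      qed
      have "48 * x / 25 = \<epsilon>\<^sup>2 * (12 * s) / 25" unfolding xdef by simp
      also have "\<dots> = (\<epsilon>\<^sup>2 * (sig2 * (12 * s)) / 25) / sig2" using sig0 by simp
      also have "\<dots> \<le> (\<epsilon>\<^sup>2 * 25 / 25) / sig2"
        using sig_le sig0 by (intro divide_right_mono mult_left_mono) auto
      also have "\<dots> = \<epsilon>\<^sup>2 / sig2" by simp
      finally have ux: "u \<ge> 48 * x / 25" unfolding u_def .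
      have "exp x * C \<le> Phi" unfolding C_def Phi_def by (rule final_num[OF x8 ux])
      then have "C / Phi \<le> exp (-x)" using Phi0 by (simp add: field_simps exp_minus)
      then show ?thesis by simp
    qed
    finally show ?thesis unfolding P_def .
  qed
qed



theorem theorem1:
  fixes N K :: nat and y :: "nat \<Rightarrow> real" and \<epsilon> :: real
    and F :: "(real \<times> real) pmf"
    and pZ :: "(nat \<Rightarrow> bool) pmf"
    and tauhat :: "(nat \<Rightarrow> bool) \<Rightarrow> (nat \<Rightarrow> real) \<Rightarrow> real"
    and Q :: "bool \<times> nat \<times> nat \<Rightarrow> bool \<times> nat \<times> nat \<Rightarrow> real"
  defines "pY \<equiv> Pi_pmf {..<N} (0, 0) (\<lambda>_. F)"
  defines "supp \<equiv> (\<lambda>a. set_pmf (map_pmf (\<lambda>p. po p a) F))"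
  defines "Pr1 \<equiv> (\<lambda>i. measure_pmf.prob pZ {z. z i})"
  defines "P \<equiv> (\<Sum>i<N. Pr1 i) / real N"
  defines "Pt \<equiv> min P (1 - P)"
  defines "VarZ \<equiv> (\<lambda>ys. measure_pmf.variance pZ (\<lambda>z. tauhat z (Yobs z ys)))"
  defines "\<beta> \<equiv> 8 * exp (- (\<epsilon>\<^sup>2 / 4) * real N * Pt)
      + 32 / (real N ^ 2 * Pt ^ 2) *
        (\<Sum>i<N. \<Sum>j<N. covariance pZ (\<lambda>z. of_bool (z i)) (\<lambda>z. of_bool (z j)))"
  assumes y_inj: "inj_on y {..<K}"
    and F_supp: "set_pmf F \<subseteq> (y ` {..<K}) \<times> (y ` {..<K})"
    and Pt_pos: "Pt > 0"
    and eps_pos: "\<epsilon> > 0"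
    and Q_sym: "\<forall>u\<in>UNIV \<times> {..<N} \<times> {..<K}. \<forall>v\<in>UNIV \<times> {..<N} \<times> {..<K}. Q u v = Q v u"
    and Q_var: "\<forall>ys\<in>set_pmf pY. VarZ ys = quad N K Q (Xtrue N K y ys)"
  shows "measure_pmf.prob (pair_pmf pZ pY) {(z, ys). constr_d N K \<epsilon> z (Xtrue N K y ys)} \<ge> 1 - \<beta>
       \<and> measure_pmf.prob (pair_pmf pZ pY)
           {(z, ys). feasible N K y supp \<epsilon> z (Yobs z ys) \<noteq> {}
                     \<and> Vstar N K Q y supp \<epsilon> z (Yobs z ys) \<ge> VarZ ys} \<ge> 1 - \<beta>"
proof -
  have N0: "N > 0"
  proof (rule ccontr)
    assume "\<not> N > 0"
    then have "N = 0" by simp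
    then have "P = 0" unfolding P_def by simp
    then have "Pt = 0" unfolding Pt_def by simp
    with Pt_pos show False by simp
  qed
  have PtP: "Pt \<le> P" "Pt \<le> 1 - P" unfolding Pt_def by auto
  define s where "s = real N * Pt"
  have s0: "s > 0" unfolding s_def using N0 Pt_pos by simp
  have sNP: "s \<le> real N * P" "s \<le> real N - real N * P" "2 * s \<le> real N"
  proof -
    show "s \<le> real N * P" unfolding s_def using PtP by (intro mult_left_mono) auto
    have "s \<le> real N * (1 - P)" unfolding s_def using PtP by (intro mult_left_mono) auto
    then show "s \<le> real N - real N * P" by (simp add: algebra_simps)
    have "2 * Pt \<le> 1" using PtP by linarith
    then have "real N * (2 * Pt) \<le> real N * 1" by (intro mult_left_mono) auto
    then show "2 * s \<le> real N" unfolding s_def by (simp add: algebra_simps)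
  qed
  define x where "x = \<epsilon>\<^sup>2 * s / 4"
  define CV where "CV = (\<Sum>i<N. \<Sum>j<N. covariance pZ (\<lambda>z. of_bool (z i)) (\<lambda>z. of_bool (z j)))"
  have CV0: "CV \<ge> 0" unfolding CV_def by (rule cov_nonneg)
  have ex: "- (\<epsilon>\<^sup>2 / 4) * real N * Pt = - x" unfolding x_def s_def by (simp add: field_simps)
  have s2: "real N ^ 2 * Pt ^ 2 = s\<^sup>2" unfolding s_def by (simp add: power_mult_distrib)
  have beta: "\<beta> = 8 * exp (- x) + 32 / s\<^sup>2 * CV"
    unfolding \<beta>_def ex s2 CV_def ..
  have T2: "32 / s\<^sup>2 * CV \<ge> 0" using CV0 by simp
  define bad where "bad = {(z, ys). \<not> constr_d N K \<epsilon> z (Xtrue N K y ys)}"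
  have main: "measure_pmf.prob (pair_pmf pZ pY) bad \<le> \<beta>"
  proof (cases "8 * exp (- x) \<ge> 1")
    case True
    have "measure_pmf.prob (pair_pmf pZ pY) bad \<le> 1" by simp
    then show ?thesis unfolding beta using True T2 by linarith
  next
    case False
    have x8: "exp x > 8" using False by (simp add: exp_minus field_simps)
    define badZ where "badZ = {z. s/5 \<le> \<bar>(\<Sum>i<N. of_bool (z i) :: real) - (\<Sum>i<N. Pr1 i)\<bar>}"
    have sumPr: "(\<Sum>i<N. Pr1 i) = real N * P" unfolding P_def using N0 by simp
    have cheb: "measure_pmf.prob pZ badZ \<le> CV / (s/5)\<^sup>2"
      unfolding badZ_def CV_def Pr1_def by (rule cheb_N1) (use s0 in simp)
    have hb: "measure_pmf.prob pY {ys. (z, ys) \<in> bad} \<le> indicator badZ z + 8 * exp (- x)" for z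
    proof (cases "z \<in> badZ")
      case True
      have a: "measure_pmf.prob pY {ys. (z, ys) \<in> bad} \<le> 1" by simp
      have b: "indicator badZ z = (1::real)" using True by simp
      show ?thesis using a b exp_gt_zero[of "-x"] by linarith
    next
      case False
      define n1 where "n1 = real (card {i\<in>{..<N}. z i})"
      have sn1: "(\<Sum>i<N. of_bool (z i) :: real) = n1" unfolding n1_def by (rule sum_of_bool_card) simp
      have F': "\<not> (s/5 \<le> \<bar>(\<Sum>i<N. of_bool (z i) :: real) - (\<Sum>i<N. Pr1 i)\<bar>)"
        using False unfolding badZ_def by blast
      have good: "\<bar>n1 - real N * P\<bar> < s/5" using F' unfolding sn1 sumPr by linarith
      have e: "n1 + (real N - n1) = real N" by simp
      note SB = sig_bound[OF e s0 sNP(1) sNP(2) good sNP(3)]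
      have "measure_pmf.prob pY {ys. (z, ys) \<in> bad} = measure_pmf.prob pY {ys. \<not> constr_d N K \<epsilon> z (Xtrue N K y ys)}"
        unfolding bad_def by simp
      also have "\<dots> \<le> 8 * exp (- x)" unfolding pY_def
      proof (rule goodz_bound[OF F_supp y_inj eps_pos x8 x_def s0])
        show "real (card {i\<in>{..<N}. z i}) > 0" using SB(2) s0 unfolding n1_def by linarith
        show "real N - real (card {i\<in>{..<N}. z i}) > 0" using SB(3) s0 unfolding n1_def by linarith
        show "12 * real N * s \<le> 25 * real (card {i\<in>{..<N}. z i}) * (real N - real (card {i\<in>{..<N}. z i}))"
          using SB(1) unfolding n1_def .
      qed
      finally show ?thesis using False by simp
    qed
    have "measure_pmf.prob (pair_pmf pZ pY) bad \<le> measure_pmf.expectation pZ (\<lambda>z. indicator badZ z + 8 * exp (- x))"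
      by (rule prob_pair_le[OF hb, where C="1 + 8 * exp (- x)"]) (auto simp: indicator_def)
    also have "\<dots> = measure_pmf.prob pZ badZ + 8 * exp (- x)"
    proof -
      have ii: "integrable (measure_pmf pZ) (indicator badZ :: _ \<Rightarrow> real)"
        by (rule integrable_pmf_bounded[where C=1]) (auto simp: indicator_def)
      show ?thesis using ii by (simp add: measure_pmf.prob_space)
    qed
    also have "\<dots> \<le> CV / (s/5)\<^sup>2 + 8 * exp (- x)" using cheb by simp
    also have "CV / (s/5)\<^sup>2 = 25 / s\<^sup>2 * CV" by (simp add: power2_eq_square field_simps)
    also have "25 / s\<^sup>2 * CV \<le> 32 / s\<^sup>2 * CV" using CV0 s0
      by (intro mult_right_mono divide_right_mono) auto
    finally show ?thesis unfolding beta by simp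
  qed
  define good where "good = {(z, ys). constr_d N K \<epsilon> z (Xtrue N K y ys)}"
  have gb: "good = UNIV - bad" unfolding good_def bad_def by auto
  have c1: "measure_pmf.prob (pair_pmf pZ pY) good \<ge> 1 - \<beta>"
    using main unfolding gb using measure_pmf.prob_compl[of bad "pair_pmf pZ pY"] by simp
  have c2: "measure_pmf.prob (pair_pmf pZ pY) good \<le> measure_pmf.prob (pair_pmf pZ pY)
           {(z, ys). feasible N K y supp \<epsilon> z (Yobs z ys) \<noteq> {}
                     \<and> Vstar N K Q y supp \<epsilon> z (Yobs z ys) \<ge> VarZ ys}"
  proof (rule measure_pmf.finite_measure_mono_AE)
    show "AE w in measure_pmf (pair_pmf pZ pY). w \<in> good \<longrightarrow> w \<in> {(z, ys). feasible N K y supp \<epsilon> z (Yobs z ys) \<noteq> {}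
                     \<and> Vstar N K Q y supp \<epsilon> z (Yobs z ys) \<ge> VarZ ys}"
    proof (rule AE_pmfI, safe)
      fix z ys assume zy: "(z, ys) \<in> set_pmf (pair_pmf pZ pY)" and g: "(z, ys) \<in> good"
      have ysY: "ys \<in> set_pmf pY" using zy by simp
      have ysF: "\<forall>i<N. ys i \<in> set_pmf F"
        using ysY unfolding pY_def by (auto simp: set_Pi_pmf PiE_dflt_def)
      have cd: "constr_d N K \<epsilon> z (Xtrue N K y ys)" using g unfolding good_def by simp
      have XF: "Xtrue N K y ys \<in> feasible N K y supp \<epsilon> z (Yobs z ys)"
        unfolding supp_def by (rule Xtrue_feasible[OF ysF F_supp y_inj cd])
      show "feasible N K y supp \<epsilon> z (Yobs z ys) = {} \<Longrightarrow> False" using XF by auto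
      have "VarZ ys = quad N K Q (Xtrue N K y ys)" using Q_var ysY by auto
      also have "\<dots> \<le> Vstar N K Q y supp \<epsilon> z (Yobs z ys)"
        unfolding Vstar_def using XF finite_feasible by (intro Max_ge) auto
      finally show "VarZ ys \<le> Vstar N K Q y supp \<epsilon> z (Yobs z ys)" .
    qed
  qed simp
  show ?thesis using c1 c2 unfolding good_def by linarith
qed

end
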